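(* For every order $p\le 44$ there exist splitting methods $$\Psi(h)=e^{hb_0B}\,e^{ha_1A}\,e^{hb_1B}\cdots e^{ha_sA}\,e^{hb_sB},\qquad a_i,b_i\in\mathbb{C},$$ of order $p$ with $\Re(a_i)\geq 0$ for all $i=1,\dots,s$.
   Context: A splitting method $\Psi(h)$ for $\dot u=Au+Bu$ is of order $p$ if, for arbitrary non-commuting operators $A$ and $B$, the formal expansion satisfies $\Psi(h)-e^{h(A+B)}=h^{p+1}E_{p+1}+h^{p+2}E_{p+2}+\cdots$. The coefficients $b_i$ are arbitrary complex numbers (no sign condition is imposed on them). *)

theory Defs
  imports Complex_Main
begin

text \<open>A formal power series in the free associative algebra generated by A, B (with the
  step size h counted by word length, i.e. h^k collects all words of length k) is
  represented by its coefficient function on words over the alphabet {A, B}.\<close>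

datatype letter = LA | LB

text \<open>Coefficient of the word w in the formal expansion of the product
  exp(h c_1 X_1) exp(h c_2 X_2) ... exp(h c_m X_m), given as the list of pairs (X_j, c_j).
  The exponential exp(h c X) contributes c^k h^k X^k / k!.\<close>

fun exp_prod_coeff :: "(letter \<times> complex) list \<Rightarrow> letter list \<Rightarrow> complex" where
  "exp_prod_coeff [] w = (if w = [] then 1 else 0)"
| "exp_prod_coeff ((X, c) # fs) w =
     (\<Sum>k\<in>{k. k \<le> length w \<and> take k w = replicate k X}.
        c ^ k / of_nat (fact k) * exp_prod_coeff fs (drop k w))"

text \<open>Coefficient of the word w in exp(h(A+B)) = sum_k h^k (A+B)^k / k!.\<close>

definition exact_coeff :: "letter list \<Rightarrow> complex" where
  "exact_coeff w = 1 / of_nat (fact (length w))"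

definition splitting_factors :: "nat \<Rightarrow> (nat \<Rightarrow> complex) \<Rightarrow> (nat \<Rightarrow> complex) \<Rightarrow> (letter \<times> complex) list" where
  "splitting_factors s a b = (LB, b 0) # concat (map (\<lambda>i. [(LA, a i), (LB, b i)]) [1..<s+1])"

text \<open>Order p: Psi(h) - exp(h(A+B)) = h^{p+1} E_{p+1} + ..., i.e. all coefficients of words
  of length at most p agree.\<close>

definition splitting_has_order :: "nat \<Rightarrow> nat \<Rightarrow> (nat \<Rightarrow> complex) \<Rightarrow> (nat \<Rightarrow> complex) \<Rightarrow> bool" where
  "splitting_has_order p s a b \<longleftrightarrow>
     (\<forall>w. length w \<le> p \<longrightarrow> exp_prod_coeff (splitting_factors s a b) w = exact_coeff w)"

end

theory Submission
  imports Defs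
begin

datatype ser = Ser (cf: "letter list \<Rightarrow> complex")

lemma ser_eqI: "(\<And>w. cf f w = cf g w) \<Longrightarrow> f = g"
  by (cases f; cases g) auto

lemma tri_sum: "(\<Sum>i\<le>n. \<Sum>j\<le>i. F j (i - j)) = (\<Sum>j\<le>(n::nat). \<Sum>k\<le>n - j. F j k)"
proof -
  have "(\<Sum>i\<le>n. \<Sum>j\<le>i. F j (i - j)) = (\<Sum>(j,k)\<in>{(j,k). j+k \<le> n}. F j k)"
    by (rule sum.triangle_reindex_eq[symmetric])
  also have "\<dots> = (\<Sum>j\<le>(n::nat). \<Sum>k\<le>n - j. F j k)"
    by (auto simp: pairs_le_eq_Sigma sum.Sigma)
  finally show ?thesis .
qed

instantiation ser :: ring_1
begin
definition "zero_ser = Ser (\<lambda>w. 0)"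
definition "one_ser = Ser (\<lambda>w. if w = [] then 1 else 0)"
definition "plus_ser f g = Ser (\<lambda>w. cf f w + cf g w)"
definition "minus_ser f g = Ser (\<lambda>w. cf f w - cf g w)"
definition "uminus_ser f = Ser (\<lambda>w. - cf f w)"
definition "times_ser f g = Ser (\<lambda>w. \<Sum>i\<le>length w. cf f (take i w) * cf g (drop i w))"

lemma cf_simps[simp]:
  "cf 0 w = 0" "cf 1 w = (if w = [] then 1 else 0)" "cf (f + g) w = cf f w + cf g w"
  "cf (f - g) w = cf f w - cf g w" "cf (- f) w = - cf f w"
  by (simp_all add: zero_ser_def one_ser_def plus_ser_def minus_ser_def uminus_ser_def)

lemma cf_times: "cf (f * g) w = (\<Sum>i\<le>length w. cf f (take i w) * cf g (drop i w))"
  by (simp add: times_ser_def)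

lemma times_assoc: "(f * g) * h = f * (g * (h::ser))"
proof (rule ser_eqI)
  fix w :: "letter list"
  let ?n = "length w"
  define F where "F j k = cf f (take j w) * cf g (take k (drop j w)) * cf h (drop (j+k) w)" for j k
  have "cf ((f * g) * h) w = (\<Sum>i\<le>?n. (\<Sum>j\<le>i. cf f (take j (take i w)) * cf g (drop j (take i w))) * cf h (drop i w))"
    by (simp add: cf_times)
  also have "\<dots> = (\<Sum>i\<le>?n. \<Sum>j\<le>i. F j (i - j))"
    by (auto simp: F_def sum_distrib_right min_def take_drop intro!: sum.cong)
  also have "\<dots> = (\<Sum>j\<le>?n. \<Sum>k\<le>?n - j. F j k)" by (rule tri_sum)
  also have "\<dots> = cf (f * (g * h)) w"
    by (auto simp: F_def cf_times sum_distrib_left mult.assoc add.commute intro!: sum.cong)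
  finally show "cf ((f * g) * h) w = cf (f * (g * h)) w" .
qed

instance
proof
  fix a b c :: ser
  show "a * b * c = a * (b * c)" by (rule times_assoc)
  show "1 * a = a"
    apply (rule ser_eqI)
    subgoal for w by (cases w) (auto simp: cf_times sum.atMost_Suc_shift simp del: sum.atMost_Suc)
    done
  show "a * 1 = a"
  proof (rule ser_eqI)
    fix w :: "letter list"
    have "(\<Sum>i\<le>length w. cf a (take i w) * (if length w = i then 1 else 0))
       = (\<Sum>i\<le>length w. if i = length w then cf a (take i w) else 0)"
      by (rule sum.cong) auto
    then show "cf (a * 1) w = cf a w" by (simp add: cf_times)
  qed
  show "(a + b) * c = a * c + b * c"
    by (rule ser_eqI) (simp add: cf_times sum.distrib distrib_right)
  show "a * (b + c) = a * b + a * c"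
    by (rule ser_eqI) (simp add: cf_times sum.distrib distrib_left)
  show "a + b + c = a + (b + c)" by (rule ser_eqI) simp
  show "a + b = b + a" by (rule ser_eqI) simp
  show "0 + a = a" by (rule ser_eqI) simp
  show "- a + a = 0" by (rule ser_eqI) simp
  show "a - b = a + - b" by (rule ser_eqI) simp
  show "(0::ser) \<noteq> 1"
  proof
    assume "(0::ser) = 1" then have "cf 0 [] = cf 1 []" by simp
    then show False by simp
  qed
qed
end



definition ordge :: "nat \<Rightarrow> ser \<Rightarrow> bool" where
  "ordge m f \<longleftrightarrow> (\<forall>w. length w < m \<longrightarrow> cf f w = 0)"

definition smul :: "complex \<Rightarrow> ser \<Rightarrow> ser" where
  "smul c f = Ser (\<lambda>w. c * cf f w)"

lemma cf_smul[simp]: "cf (smul c f) w = c * cf f w" by (simp add: smul_def)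

lemma smul_times_left: "smul c f * g = smul c (f * g)"
  by (rule ser_eqI) (simp add: cf_times sum_distrib_left mult.assoc)
lemma smul_times_right: "f * smul c g = smul c (f * g)"
  by (rule ser_eqI) (simp add: cf_times sum_distrib_left algebra_simps)
lemma smul_add: "smul c (f + g) = smul c f + smul c g"
  by (rule ser_eqI) (simp add: algebra_simps)
lemma smul_diff: "smul c (f - g) = smul c f - smul c g"
  by (rule ser_eqI) (simp add: algebra_simps)
lemma smul_smul: "smul c (smul d f) = smul (c * d) f"
  by (rule ser_eqI) (simp add: algebra_simps)
lemma smul_one[simp]: "smul 1 f = f" by (rule ser_eqI) simp
lemma smul_zero[simp]: "smul c 0 = 0" by (rule ser_eqI) simp
lemma smul_zero_left[simp]: "smul 0 f = 0" by (rule ser_eqI) simp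
lemma add_smul: "smul (c + d) f = smul c f + smul d f"
  by (rule ser_eqI) (simp add: algebra_simps)

lemma ordgeD: "ordge m f \<Longrightarrow> length w < m \<Longrightarrow> cf f w = 0"
  by (simp add: ordge_def)
lemma ordge_0[simp]: "ordge 0 f" by (simp add: ordge_def)
lemma ordge_zero[simp]: "ordge m 0" by (simp add: ordge_def)
lemma ordge_mono: "ordge m f \<Longrightarrow> k \<le> m \<Longrightarrow> ordge k f"
  by (simp add: ordge_def)
lemma ordge_add: "ordge m f \<Longrightarrow> ordge m g \<Longrightarrow> ordge m (f + g)"
  by (simp add: ordge_def)
lemma ordge_diff: "ordge m f \<Longrightarrow> ordge m g \<Longrightarrow> ordge m (f - g)"
  by (simp add: ordge_def)
lemma ordge_uminus: "ordge m f \<Longrightarrow> ordge m (- f)"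
  by (simp add: ordge_def)
lemma ordge_smul: "ordge m f \<Longrightarrow> ordge m (smul c f)"
  by (simp add: ordge_def)
lemma ordge_mult: "ordge a f \<Longrightarrow> ordge b g \<Longrightarrow> ordge (a + b) (f * g)"
  unfolding ordge_def cf_times
proof (intro allI impI sum.neutral ballI)
  fix w :: "letter list" and i
  assume f: "\<forall>w. length w < a \<longrightarrow> cf f w = 0" and g: "\<forall>w. length w < b \<longrightarrow> cf g w = 0"
    and w: "length w < a + b" and i: "i \<in> {..length w}"
  show "cf f (take i w) * cf g (drop i w) = 0"
  proof (cases "i < a")
    case True then show ?thesis using f i by auto
  next
    case False then show ?thesis using g w i by auto
  qed
qed
lemma ordge_mult_le: "ordge a f \<Longrightarrow> ordge b g \<Longrightarrow> m \<le> a + b \<Longrightarrow> ordge m (f * g)"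
  using ordge_mono ordge_mult by blast
lemma ordge_multL: "ordge a f \<Longrightarrow> ordge a (f * g)"
  using ordge_mult[of a f 0 g] by simp
lemma ordge_multR: "ordge a g \<Longrightarrow> ordge a (f * g)"
  using ordge_mult[of 0 f a g] by simp
lemma ordge_sum: "(\<And>i. i \<in> S \<Longrightarrow> ordge m (F i)) \<Longrightarrow> ordge m (\<Sum>i\<in>S. F i)"
proof (induction S rule: infinite_finite_induct)
  case (insert x F) then show ?case by (simp add: ordge_add)
qed auto

lemma cf_sum: "cf (\<Sum>i\<in>S. F i) w = (\<Sum>i\<in>S. cf (F i) w)"
  by (induction S rule: infinite_finite_induct) auto

definition lt :: "letter \<Rightarrow> ser" where "lt X = Ser (\<lambda>w. if w = [X] then 1 else 0)"

lemma cf_lt_times: "cf (lt X * f) w = (if w \<noteq> [] \<and> hd w = X then cf f (tl w) else 0)"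
proof (cases w)
  case Nil then show ?thesis by (simp add: cf_times lt_def)
next
  case (Cons x xs)
  have "cf (lt X * f) w = (\<Sum>i\<le>Suc (length xs). (if take i (x # xs) = [X] then 1 else 0) * cf f (drop i (x#xs)))"
    by (simp only: cf_times lt_def Cons ser.sel length_Cons)
  also have "\<dots> = (\<Sum>i\<le>Suc (length xs). if take i (x # xs) = [X] then cf f (drop i (x#xs)) else 0)"
    by (rule sum.cong) auto
  also have "\<dots> = (\<Sum>i\<le>Suc (length xs). if i = 1 then (if x = X then cf f xs else 0) else 0)"
    by (rule sum.cong) (auto simp: take_Cons' split: if_splits)
  also have "\<dots> = (if x = X then cf f xs else 0)" by (subst sum.delta[where a=1]) auto
  finally show ?thesis by (simp add: Cons)
qed

lemma cf_times_lt: "cf (f * lt X) w = (if w \<noteq> [] \<and> last w = X then cf f (butlast w) else 0)"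
proof -
  have "cf (f * lt X) w = (\<Sum>i\<le>length w. if i = length w - 1 \<and> w \<noteq> [] then (if last w = X then cf f (butlast w) else 0) else 0)"
    unfolding cf_times lt_def
  proof (rule sum.cong)
    fix i assume i: "i \<in> {..length w}"
    show "cf f (take i w) * cf (Ser (\<lambda>w. if w = [X] then 1 else 0)) (drop i w) =
      (if i = length w - 1 \<and> w \<noteq> [] then if last w = X then cf f (butlast w) else 0 else 0)"
    proof (cases "i = length w - 1 \<and> w \<noteq> []")
      case True
      then have "drop i w = [last w]"
        by (metis append_butlast_last_id append_eq_conv_conj drop_all length_butlast order_refl drop_append)
      moreover have "take i w = butlast w" using True by (simp add: butlast_conv_take)
      ultimately show ?thesis using True by auto
    next
      case False
      then have "drop i w \<noteq> [X]" using i by (auto simp: length_drop dest!: arg_cong[where f=length])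
      then show ?thesis using False by auto
    qed
  qed simp
  also have "\<dots> = (if w \<noteq> [] \<and> last w = X then cf f (butlast w) else 0)"
    by (cases "w = []") auto
  finally show ?thesis .
qed

lemma ordge_lt: "ordge 1 (lt X)" by (simp add: ordge_def lt_def)
lemma ordge_lt'[simp]: "ordge (Suc 0) (lt X)" by (simp add: ordge_def lt_def)

definition expser :: "letter \<Rightarrow> complex \<Rightarrow> ser" where
  "expser X c = Ser (\<lambda>w. if w = replicate (length w) X then c ^ length w / fact (length w) else 0)"

lemma take_drop_rep:
  assumes "i \<le> length w"
  shows "(take i w = replicate i X \<and> drop i w = replicate (length w - i) X) \<longleftrightarrow> w = replicate (length w) X"
proof
  assume "take i w = replicate i X \<and> drop i w = replicate (length w - i) X"
  then have "w = replicate i X @ replicate (length w - i) X" by (metis append_take_drop_id)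
  then show "w = replicate (length w) X" by (metis assms le_add_diff_inverse replicate_add)
next
  assume "w = replicate (length w) X"
  then show "take i w = replicate i X \<and> drop i w = replicate (length w - i) X"
    by (metis assms drop_replicate min.absorb1 take_replicate)
qed

lemma expser_add: "expser X c * expser X d = expser X (c + d)"
proof (rule ser_eqI)
  fix w :: "letter list"
  let ?n = "length w"
  show "cf (expser X c * expser X d) w = cf (expser X (c + d)) w"
  proof (cases "w = replicate ?n X")
    case True
    have "cf (expser X c * expser X d) w = (\<Sum>i\<le>?n. c ^ i / fact i * (d ^ (?n - i) / fact (?n - i)))"
      unfolding cf_times expser_def using True take_drop_rep[of _ w X]
      by (intro sum.cong) (auto simp: min_def)
    also have "\<dots> = (\<Sum>i\<le>?n. of_nat (?n choose i) * c ^ i * d ^ (?n - i)) / fact ?n"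
      by (simp add: sum_divide_distrib binomial_fact field_simps)
    also have "\<dots> = (c + d) ^ ?n / fact ?n" by (simp add: binomial_ring)
    finally show ?thesis using True by (simp add: expser_def)
  next
    case False
    have "cf (expser X c * expser X d) w = 0"
      unfolding cf_times expser_def using False take_drop_rep[of _ w X]
      by (intro sum.neutral) (auto simp: min_def)
    then show ?thesis using False by (simp add: expser_def)
  qed
qed

lemma expser_0[simp]: "expser X 0 = 1"
  by (rule ser_eqI) (auto simp: expser_def)

lemma expser_inv: "expser X c * expser X (- c) = 1" "expser X (- c) * expser X c = 1"
  by (simp_all add: expser_add)

lemma cf_expser_Nil[simp]: "cf (expser X c) [] = 1" by (simp add: expser_def)

lemma expser_lin: "ordge 2 (expser X c - 1 - smul c (lt X))"
  unfolding ordge_def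
proof (intro allI impI)
  fix w :: "letter list" assume "length w < 2"
  then have "w = [] \<or> (\<exists>x. w = [x])" by (cases w) auto
  then show "cf (expser X c - 1 - smul c (lt X)) w = 0"
    by (auto simp: expser_def lt_def)
qed

lemma expser_ord1: "ordge 1 (expser X c - 1)"
  by (simp add: ordge_def)


definition Pl :: "(letter \<times> complex) list \<Rightarrow> ser" where
  "Pl fs = foldr (\<lambda>p acc. expser (fst p) (snd p) * acc) fs 1"

lemma Pl_simps[simp]: "Pl [] = 1" "Pl ((X,c) # fs) = expser X c * Pl fs"
  by (simp_all add: Pl_def)

lemma Pl_append: "Pl (fs @ gs) = Pl fs * Pl gs"
  by (induction fs) (auto simp: mult.assoc)

lemma cf_Pl: "cf (Pl fs) w = exp_prod_coeff fs w"
proof (induction fs arbitrary: w)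
  case Nil then show ?case by simp
next
  case (Cons p fs)
  obtain X c where p: "p = (X, c)" by (cases p)
  have "cf (Pl (p # fs)) w = (\<Sum>i\<le>length w. (if take i w = replicate i X then c ^ i / fact i else 0) * exp_prod_coeff fs (drop i w))"
    unfolding p Pl_simps cf_times Cons.IH
    by (rule sum.cong) (auto simp: expser_def min_def)
  also have "\<dots> = (\<Sum>i\<in>{i\<in>{..length w}. take i w = replicate i X}. c ^ i / fact i * exp_prod_coeff fs (drop i w))"
    by (subst sum.inter_filter) (auto intro!: sum.cong)
  also have "\<dots> = exp_prod_coeff (p # fs) w"
    by (simp add: p conj_commute)
  finally show ?case .
qed

definition invl :: "(letter \<times> complex) list \<Rightarrow> (letter \<times> complex) list" where
  "invl fs = rev (map (\<lambda>(X,c). (X, -c)) fs)"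

lemma invl_simps[simp]: "invl [] = []" "invl ((X,c) # fs) = invl fs @ [(X, -c)]"
  by (simp_all add: invl_def)

lemma Pl_invl: "Pl fs * Pl (invl fs) = 1" "Pl (invl fs) * Pl fs = 1"
proof (induction fs)
  case (Cons p fs)
  obtain X c where p: "p = (X, c)" by (cases p)
  have "Pl (p # fs) * Pl (invl (p # fs)) = expser X c * (Pl fs * Pl (invl fs)) * expser X (-c)"
    by (simp add: p Pl_append mult.assoc)
  also have "\<dots> = 1" using Cons.IH by (simp add: expser_inv)
  finally show "Pl (p # fs) * Pl (invl (p # fs)) = 1" .
  have "Pl (invl (p # fs)) * Pl (p # fs) = Pl (invl fs) * (expser X (-c) * expser X c) * Pl fs"
    by (simp add: p Pl_append mult.assoc)
  also have "\<dots> = 1" using Cons.IH by (simp add: expser_inv)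
  finally show "Pl (invl (p # fs)) * Pl (p # fs) = 1" .
qed auto

lemma cf_Pl_Nil[simp]: "cf (Pl fs) [] = 1"
  by (induction fs) (auto simp: cf_times)

lemma Pl_ord1: "ordge 1 (Pl fs - 1)"
  by (simp add: ordge_def)

definition Nd :: "ser \<Rightarrow> ser" where "Nd f = Ser (\<lambda>w. of_nat (length w) * cf f w)"

lemma cf_Nd[simp]: "cf (Nd f) w = of_nat (length w) * cf f w" by (simp add: Nd_def)

lemma Nd_mult: "Nd (f * g) = Nd f * g + f * Nd g"
proof (rule ser_eqI)
  fix w :: "letter list"
  let ?n = "length w"
  have A: "cf (Nd f * g) w = (\<Sum>i\<le>?n. of_nat i * (cf f (take i w) * cf g (drop i w)))"
    by (auto simp: cf_times min_def intro!: sum.cong)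
  have B: "cf (f * Nd g) w = (\<Sum>i\<le>?n. of_nat (?n - i) * (cf f (take i w) * cf g (drop i w)))"
    by (auto simp: cf_times min_def intro!: sum.cong)
  have "cf (Nd (f * g)) w = (\<Sum>i\<le>?n. (of_nat i + of_nat (?n - i)) * (cf f (take i w) * cf g (drop i w)))"
    by (auto simp: cf_times sum_distrib_left intro!: sum.cong simp flip: of_nat_add)
  also have "\<dots> = cf (Nd f * g) w + cf (f * Nd g) w"
    unfolding A B sum.distrib[symmetric] by (rule sum.cong) (auto simp: algebra_simps of_nat_diff)
  finally show "cf (Nd (f * g)) w = cf (Nd f * g + f * Nd g) w" by simp
qed

lemma Nd_add: "Nd (f + g) = Nd f + Nd g" by (rule ser_eqI) (simp add: algebra_simps)
lemma Nd_diff: "Nd (f - g) = Nd f - Nd g" by (rule ser_eqI) (simp add: algebra_simps)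
lemma Nd_one[simp]: "Nd 1 = 0" by (rule ser_eqI) simp

lemma ordge_Nd: "ordge m f \<Longrightarrow> ordge m (Nd f)" by (simp add: ordge_def)

lemma rep_Suc_iff: "(w \<noteq> [] \<and> hd w = X \<and> tl w = replicate (length (tl w)) X) \<longleftrightarrow> (w \<noteq> [] \<and> w = replicate (length w) X)"
  by (cases w) auto

lemma rep_Suc_iff': "(w \<noteq> [] \<and> last w = X \<and> butlast w = replicate (length (butlast w)) X) \<longleftrightarrow> (w \<noteq> [] \<and> w = replicate (length w) X)"
proof (cases w rule: rev_cases)
  case (snoc ys y) then show ?thesis
    by (auto simp: replicate_append_same[symmetric] simp del: replicate_append_same)
qed auto

lemma lt_expser_comm: "lt X * expser X c = expser X c * lt X"
proof (rule ser_eqI)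
  fix w :: "letter list"
  have "cf (lt X * expser X c) w = (if w \<noteq> [] \<and> w = replicate (length w) X then c ^ (length w - 1) / fact (length w - 1) else 0)"
    unfolding cf_lt_times using rep_Suc_iff[of w X] by (auto simp: expser_def)
  moreover have "cf (expser X c * lt X) w = (if w \<noteq> [] \<and> w = replicate (length w) X then c ^ (length w - 1) / fact (length w - 1) else 0)"
    unfolding cf_times_lt using rep_Suc_iff'[of w X] by (auto simp: expser_def)
  ultimately show "cf (lt X * expser X c) w = cf (expser X c * lt X) w" by simp
qed

lemma Nd_expser: "Nd (expser X c) = smul c (lt X * expser X c)"
proof (rule ser_eqI)
  fix w :: "letter list"
  show "cf (Nd (expser X c)) w = cf (smul c (lt X * expser X c)) w"
  proof (cases "w \<noteq> [] \<and> w = replicate (length w) X")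
    case True
    then obtain n where n: "length w = Suc n" by (cases w) auto
    have "cf (smul c (lt X * expser X c)) w = c * (c ^ n / fact n)"
      unfolding cf_smul cf_lt_times using True rep_Suc_iff[of w X] n by (auto simp: expser_def)
    moreover have "cf (Nd (expser X c)) w = of_nat (Suc n) * (c ^ Suc n / fact (Suc n))"
      using True n by (simp add: expser_def)
    moreover have "of_nat (Suc n) * (c ^ Suc n / fact (Suc n)) = c * (c ^ n / (fact n :: complex))"
      by (simp add: field_simps del: of_nat_Suc)
    ultimately show ?thesis by simp
  next
    case False
    then show ?thesis
      unfolding cf_smul cf_lt_times using rep_Suc_iff[of w X] by (auto simp: expser_def)
  qed
qed

fun Lf :: "(letter \<times> complex) list \<Rightarrow> ser" where
  "Lf [] = 0"
| "Lf ((X,c) # fs) = smul c (lt X) + expser X c * Lf fs * expser X (-c)"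

lemma Nd_Pl: "Nd (Pl fs) = Lf fs * Pl fs"
proof (induction fs)
  case (Cons p fs)
  obtain X c where p: "p = (X, c)" by (cases p)
  have "Nd (Pl (p # fs)) = smul c (lt X * expser X c) * Pl fs + expser X c * (Lf fs * Pl fs)"
    by (simp add: p Nd_mult Nd_expser Cons.IH)
  also have "\<dots> = smul c (lt X) * (expser X c * Pl fs) + expser X c * Lf fs * (expser X (-c) * expser X c) * Pl fs"
    by (simp add: expser_inv smul_times_left mult.assoc)
  also have "\<dots> = Lf (p # fs) * Pl (p # fs)"
    by (simp add: p algebra_simps)
  finally show ?case .
qed simp

lemma Lf_append: "Lf (fs @ gs) = Lf fs + Pl fs * Lf gs * Pl (invl fs)"
proof (induction fs)
  case (Cons p fs)
  obtain X c where p: "p = (X, c)" by (cases p)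
  show ?case by (simp add: p Cons.IH Pl_append algebra_simps)
qed simp


section \<open>Lie elements\<close>

definition homog :: "nat \<Rightarrow> ser \<Rightarrow> ser" where
  "homog n f = Ser (\<lambda>w. if length w = n then cf f w else 0)"

lemma cf_homog[simp]: "cf (homog n f) w = (if length w = n then cf f w else 0)"
  by (simp add: homog_def)

definition hom :: "nat \<Rightarrow> ser \<Rightarrow> bool" where
  "hom n f \<longleftrightarrow> (\<forall>w. length w \<noteq> n \<longrightarrow> cf f w = 0)"

lemma homog_add: "homog n (f + g) = homog n f + homog n g" by (rule ser_eqI) simp
lemma homog_diff: "homog n (f - g) = homog n f - homog n g" by (rule ser_eqI) simp
lemma homog_smul: "homog n (smul c f) = smul c (homog n f)" by (rule ser_eqI) simp
lemma homog_zero[simp]: "homog n 0 = 0" by (rule ser_eqI) simp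
lemma homog_sum: "homog n (\<Sum>i\<in>S. F i) = (\<Sum>i\<in>S. homog n (F i))"
  by (rule ser_eqI) (simp add: cf_sum)
lemma homog_hom: "hom n f \<Longrightarrow> homog n f = f"
  by (rule ser_eqI) (simp add: hom_def)
lemma homog_hom0: "hom n f \<Longrightarrow> m \<noteq> n \<Longrightarrow> homog m f = 0"
  by (rule ser_eqI) (simp add: hom_def)
lemma hom_homog: "hom n (homog n f)" by (simp add: hom_def)
lemma homog_ordge: "ordge (Suc n) f \<Longrightarrow> homog n f = 0"
  by (rule ser_eqI) (simp add: ordge_def)
lemma homog_ordge': "ordge m f \<Longrightarrow> n < m \<Longrightarrow> homog n f = 0"
  by (rule ser_eqI) (simp add: ordge_def)

lemma hom_add: "hom n f \<Longrightarrow> hom n g \<Longrightarrow> hom n (f + g)" by (simp add: hom_def)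
lemma hom_diff: "hom n f \<Longrightarrow> hom n g \<Longrightarrow> hom n (f - g)" by (simp add: hom_def)
lemma hom_smul: "hom n f \<Longrightarrow> hom n (smul c f)" by (simp add: hom_def)
lemma hom_zero[simp]: "hom n 0" by (simp add: hom_def)
lemma hom_mult: "hom a f \<Longrightarrow> hom b g \<Longrightarrow> hom (a + b) (f * g)"
  unfolding hom_def cf_times
proof (intro allI impI sum.neutral ballI)
  fix w :: "letter list" and i
  assume f: "\<forall>w. length w \<noteq> a \<longrightarrow> cf f w = 0" and g: "\<forall>w. length w \<noteq> b \<longrightarrow> cf g w = 0"
    and w: "length w \<noteq> a + b" and i: "i \<in> {..length w}"
  show "cf f (take i w) * cf g (drop i w) = 0"
  proof (cases "i = a")
    case True then show ?thesis using g w i by auto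
  next
    case False then show ?thesis using f i by auto
  qed
qed
lemma hom_lt: "hom 1 (lt x)" by (simp add: hom_def lt_def)
lemma hom_lt'[simp]: "hom (Suc 0) (lt x)" by (simp add: hom_def lt_def)

lemma homog_mult: "homog n (f * g) = (\<Sum>a\<le>n. homog a f * homog (n - a) g)"
proof (rule ser_eqI)
  fix w :: "letter list"
  show "cf (homog n (f * g)) w = cf (\<Sum>a\<le>n. homog a f * homog (n - a) g) w"
  proof (cases "length w = n")
    case True
    have "cf (\<Sum>a\<le>n. homog a f * homog (n - a) g) w
        = (\<Sum>a\<le>n. \<Sum>i\<le>n. if i = a then cf f (take i w) * cf g (drop i w) else 0)"
      unfolding cf_sum cf_times using True by (intro sum.cong) (auto simp: min_def)
    also have "\<dots> = (\<Sum>i\<le>n. \<Sum>a\<le>n. if i = a then cf f (take i w) * cf g (drop i w) else 0)"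
      by (rule sum.swap)
    also have "\<dots> = (\<Sum>i\<le>n. cf f (take i w) * cf g (drop i w))"
      by (simp add: sum.delta)
    finally show ?thesis using True by (simp add: cf_times)
  next
    case False
    have "cf (\<Sum>a\<le>n. homog a f * homog (n - a) g) w = 0"
      unfolding cf_sum cf_times using False by (intro sum.neutral ballI) auto
    then show ?thesis using False by simp
  qed
qed

definition ad :: "letter \<Rightarrow> ser \<Rightarrow> ser" where "ad Y Z = lt Y * Z - Z * lt Y"

fun rb :: "letter list \<Rightarrow> ser" where
  "rb [] = 0"
| "rb (x # v) = (if v = [] then lt x else ad x (rb v))"

lemma hom_ad: "hom n f \<Longrightarrow> hom (Suc n) (ad Y f)"
proof -
  assume f: "hom n f"
  have "hom (1 + n) (lt Y * f)" by (rule hom_mult[OF hom_lt f])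
  moreover have "hom (n + 1) (f * lt Y)" by (rule hom_mult[OF f hom_lt])
  ultimately show ?thesis unfolding ad_def by (intro hom_diff) auto
qed

lemma hom_rb: "hom (length v) (rb v)"
  by (induction v) (auto simp: hom_lt hom_ad)

lemma ad_add: "ad Y (f + g) = ad Y f + ad Y g" by (simp add: ad_def algebra_simps)
lemma ad_smul: "ad Y (smul c f) = smul c (ad Y f)" by (simp add: ad_def smul_times_left smul_times_right smul_diff)

inductive lieh :: "nat \<Rightarrow> ser \<Rightarrow> bool" where
  lz: "lieh n 0"
| lg: "length v = n \<Longrightarrow> lieh n (smul c (rb v))"
| la: "lieh n a \<Longrightarrow> lieh n b \<Longrightarrow> lieh n (a + b)"

lemma lieh_hom: "lieh n a \<Longrightarrow> hom n a"
  by (induction rule: lieh.induct) (auto intro: hom_add hom_smul hom_rb)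

lemma lieh_smul: "lieh n a \<Longrightarrow> lieh n (smul c a)"
  by (induction rule: lieh.induct) (auto simp: smul_smul smul_add intro: lieh.intros)

lemma lieh_uminus: "lieh n a \<Longrightarrow> lieh n (- a)"
proof -
  assume "lieh n a"
  then have "lieh n (smul (-1) a)" by (rule lieh_smul)
  moreover have "smul (-1) a = - a" by (rule ser_eqI) simp
  ultimately show ?thesis by simp
qed

lemma lieh_diff: "lieh n a \<Longrightarrow> lieh n b \<Longrightarrow> lieh n (a - b)"
  using lieh.la[of n a "- b"] lieh_uminus by simp

lemma lieh_sum: "(\<And>i. i \<in> S \<Longrightarrow> lieh n (F i)) \<Longrightarrow> lieh n (\<Sum>i\<in>S. F i)"
proof (induction S rule: infinite_finite_induct)
  case (insert x F) then show ?case by (simp add: lieh.la)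
qed (auto intro: lieh.lz)

lemma lieh_rb: "length v = n \<Longrightarrow> lieh n (rb v)"
  using lieh.lg[of v n 1] by simp

lemma lieh_ad: "lieh n a \<Longrightarrow> lieh (Suc n) (ad Y a)"
proof (induction rule: lieh.induct)
  case (lz n) then show ?case by (simp add: ad_def lieh.lz)
next
  case (lg v n c)
  show ?case
  proof (cases "v = []")
    case True then show ?thesis by (simp add: ad_def lieh.lz)
  next
    case False
    then have "ad Y (rb v) = rb (Y # v)" by simp
    then show ?thesis using lg lieh.lg[of "Y # v" "Suc n" c] by (simp add: ad_smul)
  qed
next
  case (la n a b) then show ?case by (simp add: ad_add lieh.la)
qed

definition br :: "ser \<Rightarrow> ser \<Rightarrow> ser" where "br U V = U * V - V * U"

lemma br_rb: "lieh (length u + length v) (br (rb u) (rb v))"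
proof (induction v arbitrary: u)
  case Nil then show ?case by (simp add: br_def lieh.lz)
next
  case (Cons x v)
  show ?case
  proof (cases "u = []")
    case True then show ?thesis by (simp add: br_def lieh.lz)
  next
    case u: False
    show ?thesis
    proof (cases "v = []")
      case True
      have "br (rb u) (rb (x # v)) = - ad x (rb u)" using True by (simp add: br_def ad_def)
      moreover have "lieh (Suc (length u)) (ad x (rb u))" by (rule lieh_ad[OF lieh_rb]) simp
      ultimately show ?thesis using True by (simp add: lieh_uminus)
    next
      case False
      have "br (rb u) (rb (x # v)) = ad x (br (rb u) (rb v)) - br (rb (x # u)) (rb v)"
        using False u by (simp add: br_def ad_def algebra_simps)
      moreover have "lieh (Suc (length u + length v)) (ad x (br (rb u) (rb v)))"
        by (rule lieh_ad[OF Cons.IH])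
      moreover have "lieh (length (x # u) + length v) (br (rb (x # u)) (rb v))"
        by (rule Cons.IH)
      ultimately show ?thesis by (simp add: lieh_diff)
    qed
  qed
qed

lemma br_add1: "br (a + b) c = br a c + br b c" by (simp add: br_def algebra_simps)
lemma br_add2: "br c (a + b) = br c a + br c b" by (simp add: br_def algebra_simps)
lemma br_smul1: "br (smul k a) c = smul k (br a c)"
  by (simp add: br_def smul_times_left smul_times_right smul_diff)
lemma br_smul2: "br c (smul k a) = smul k (br c a)"
  by (simp add: br_def smul_times_left smul_times_right smul_diff)
lemma br_zero[simp]: "br 0 c = 0" "br c 0 = 0" by (simp_all add: br_def)

lemma lieh_br: "lieh a u \<Longrightarrow> lieh b v \<Longrightarrow> lieh (a + b) (br u v)"
proof (induction arbitrary: v rule: lieh.induct)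
  case (lz n) then show ?case by (simp add: lieh.lz)
next
  case (la n a1 a2) then show ?case by (simp add: br_add1 lieh.la)
next
  case (lg u n c)
  have un: "length u = n" by fact
  from lg(2) show ?case
  proof (induction rule: lieh.induct)
    case (lz n) then show ?case by (simp add: lieh.lz)
  next
    case (la m b1 b2) then show ?case by (simp add: br_add2 lieh.la)
  next
    case (lg v m d)
    show ?case using br_rb[of u v] un lg.hyps
      by (auto simp: br_smul1 br_smul2 intro!: lieh_smul)
  qed
qed

definition lies :: "ser \<Rightarrow> bool" where "lies Z \<longleftrightarrow> (\<forall>n. lieh n (homog n Z))"

lemma lies_add: "lies a \<Longrightarrow> lies b \<Longrightarrow> lies (a + b)"
  by (simp add: lies_def homog_add lieh.la)
lemma lies_smul: "lies a \<Longrightarrow> lies (smul c a)"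
  by (simp add: lies_def homog_smul lieh_smul)
lemma lies_zero[simp]: "lies 0" by (simp add: lies_def lieh.lz)
lemma lies_sum: "(\<And>i. i \<in> S \<Longrightarrow> lies (F i)) \<Longrightarrow> lies (\<Sum>i\<in>S. F i)"
  by (simp add: lies_def homog_sum lieh_sum)
lemma lies_lieh: "lieh k z \<Longrightarrow> lies z"
  unfolding lies_def
proof
  fix n assume "lieh k z"
  then show "lieh n (homog n z)"
  proof (cases "n = k")
    case True then show ?thesis using \<open>lieh k z\<close> by (simp add: homog_hom lieh_hom)
  next
    case False then show ?thesis using \<open>lieh k z\<close> homog_hom0[OF lieh_hom] by (simp add: lieh.lz)
  qed
qed

lemma lies_br: "lies U \<Longrightarrow> lies V \<Longrightarrow> lies (br U V)"
  unfolding lies_def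
proof
  fix n assume U: "\<forall>n. lieh n (homog n U)" and V: "\<forall>n. lieh n (homog n V)"
  have "homog n (br U V) = (\<Sum>a\<le>n. br (homog a U) (homog (n - a) V))"
  proof -
    have "homog n (V * U) = (\<Sum>a\<le>n. homog (n - a) V * homog a U)"
      unfolding homog_mult by (rule sum.reindex_bij_witness[where i="\<lambda>a. n - a" and j="\<lambda>a. n - a"]) auto
    then show ?thesis by (simp add: br_def homog_diff homog_mult sum_subtractf)
  qed
  moreover have "lieh n (\<Sum>a\<le>n. br (homog a U) (homog (n - a) V))"
  proof (intro lieh_sum)
    fix a assume "a \<in> {..n}"
    then show "lieh n (br (homog a U) (homog (n - a) V))"
      using lieh_br[OF spec[OF U, of a] spec[OF V, of "n-a"]] by simp
  qed
  ultimately show "lieh n (homog n (br U V))" by simp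
qed


section \<open>Conjugation\<close>

definition cj :: "letter \<Rightarrow> complex \<Rightarrow> ser \<Rightarrow> ser" where
  "cj Y d Z = expser Y d * Z * expser Y (- d)"

lemma cj_mult: "cj Y d (a * b) = cj Y d a * cj Y d b"
proof -
  have "cj Y d a * cj Y d b = expser Y d * a * (expser Y (- d) * expser Y d) * b * expser Y (- d)"
    by (simp add: cj_def mult.assoc)
  then show ?thesis by (simp add: expser_inv cj_def mult.assoc)
qed
lemma cj_add: "cj Y d (a + b) = cj Y d a + cj Y d b" by (simp add: cj_def algebra_simps)
lemma cj_diff: "cj Y d (a - b) = cj Y d a - cj Y d b" by (simp add: cj_def algebra_simps)
lemma cj_smul: "cj Y d (smul c a) = smul c (cj Y d a)" by (simp add: cj_def smul_times_left smul_times_right)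
lemma cj_zero[simp]: "cj Y d 0 = 0" by (simp add: cj_def)
lemma cj_br: "cj Y d (br a b) = br (cj Y d a) (cj Y d b)" by (simp add: br_def cj_diff cj_mult)
lemma cj_sum: "cj Y d (\<Sum>i\<in>S. F i) = (\<Sum>i\<in>S. cj Y d (F i))"
  by (induction S rule: infinite_finite_induct) (auto simp: cj_add)
lemma cj_ltY: "cj Y d (lt Y) = lt Y"
proof -
  have "cj Y d (lt Y) = (expser Y d * expser Y (-d)) * lt Y"
    unfolding cj_def by (simp only: mult.assoc lt_expser_comm)
  then show ?thesis by (simp add: expser_inv)
qed
lemma ordge_cj: "ordge m Z \<Longrightarrow> ordge m (cj Y d Z)"
  by (simp add: cj_def ordge_multL ordge_multR)

lemma count_rep: "count_list (replicate n Y) Y = n"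
  by (induction n) auto

definition DY :: "letter \<Rightarrow> ser \<Rightarrow> ser" where
  "DY Y f = Ser (\<lambda>w. of_nat (count_list w Y) * cf f w)"

lemma cf_DY[simp]: "cf (DY Y f) w = of_nat (count_list w Y) * cf f w" by (simp add: DY_def)

lemma count_take_drop: "count_list (take i w) Y + count_list (drop i w) Y = count_list w Y"
  by (metis append_take_drop_id count_list_append)

lemma DY_mult: "DY Y (f * g) = DY Y f * g + f * DY Y g"
proof (rule ser_eqI)
  fix w :: "letter list"
  let ?n = "length w"
  have "cf (DY Y (f * g)) w = (\<Sum>i\<le>?n. (of_nat (count_list (take i w) Y) + of_nat (count_list (drop i w) Y)) * (cf f (take i w) * cf g (drop i w)))"
    by (auto simp: cf_times sum_distrib_left count_take_drop intro!: sum.cong simp flip: of_nat_add)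
  also have "\<dots> = cf (DY Y f * g) w + cf (f * DY Y g) w"
    unfolding cf_times cf_DY sum.distrib[symmetric] by (rule sum.cong) (auto simp: algebra_simps)
  finally show "cf (DY Y (f * g)) w = cf (DY Y f * g + f * DY Y g) w" by simp
qed

lemma DY_expser: "DY Y (expser Y c) = smul c (lt Y * expser Y c)"
proof (rule ser_eqI)
  fix w :: "letter list"
  have "cf (DY Y (expser Y c)) w = cf (Nd (expser Y c)) w"
    by (auto simp: expser_def) (metis count_rep)
  then show "cf (DY Y (expser Y c)) w = cf (smul c (lt Y * expser Y c)) w"
    by (simp add: Nd_expser)
qed

lemma DY_lt: "x \<noteq> Y \<Longrightarrow> DY Y (lt x) = 0"
  by (rule ser_eqI) (auto simp: lt_def)

lemma DY_homog: "DY Y (homog n f) = homog n (DY Y f)" by (rule ser_eqI) simp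
lemma DY_smul: "DY Y (smul c f) = smul c (DY Y f)" by (rule ser_eqI) simp

definition suppY :: "letter \<Rightarrow> nat \<Rightarrow> ser \<Rightarrow> bool" where
  "suppY Y k f \<longleftrightarrow> (\<forall>w. cf f w \<noteq> 0 \<longrightarrow> length w = count_list w Y + k)"

lemma suppY_mult: "suppY Y a f \<Longrightarrow> suppY Y b g \<Longrightarrow> suppY Y (a + b) (f * g)"
  unfolding suppY_def
proof (intro allI impI)
  fix w :: "letter list"
  assume f: "\<forall>w. cf f w \<noteq> 0 \<longrightarrow> length w = count_list w Y + a"
    and g: "\<forall>w. cf g w \<noteq> 0 \<longrightarrow> length w = count_list w Y + b" and nz: "cf (f * g) w \<noteq> 0"
  then obtain i where i: "i \<le> length w" "cf f (take i w) \<noteq> 0" "cf g (drop i w) \<noteq> 0"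
    unfolding cf_times by (metis (no_types, lifting) atMost_iff mult_not_zero sum.neutral)
  then have "length (take i w) = count_list (take i w) Y + a" "length (drop i w) = count_list (drop i w) Y + b"
    using f g by auto
  then show "length w = count_list w Y + (a + b)"
    using i(1) count_take_drop[of i w Y] by auto
qed

lemma suppY_expser: "suppY Y 0 (expser Y c)"
  by (auto simp: suppY_def expser_def) (metis count_rep)

lemma suppY_lt: "x \<noteq> Y \<Longrightarrow> suppY Y 1 (lt x)"
  by (auto simp: suppY_def lt_def)

lemma DY_homog_supp1: "suppY Y 1 f \<Longrightarrow> DY Y (homog n f) = smul (of_nat (n - 1)) (homog n f)"
  by (rule ser_eqI) (auto simp: suppY_def)

lemma homog_ltL: "homog (Suc n) (lt Y * f) = lt Y * homog n f"
  by (rule ser_eqI) (auto simp: cf_lt_times)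
lemma homog_ltR: "homog (Suc n) (f * lt Y) = homog n f * lt Y"
  by (rule ser_eqI) (auto simp: cf_times_lt)
lemma homog_ad: "homog (Suc n) (ad Y f) = ad Y (homog n f)"
  by (simp add: ad_def homog_diff homog_ltL homog_ltR)

lemma cj_lt_lies:
  assumes xY: "x \<noteq> Y"
  shows "lies (cj Y d (lt x))"
proof -
  let ?W = "cj Y d (lt x)"
  let ?E = "expser Y d" and ?Ei = "expser Y (- d)"
  have DW: "DY Y ?W = smul d (ad Y ?W)"
  proof -
    have "DY Y ?W = smul d (lt Y * ?E) * lt x * ?Ei + ?E * lt x * smul (- d) (lt Y * ?Ei)"
      by (simp add: cj_def DY_mult DY_expser DY_lt[OF xY])
    also have "\<dots> = smul d (lt Y * (?E * lt x * ?Ei)) - smul d (?E * lt x * ?Ei * lt Y)"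
    proof -
      have a: "smul d (lt Y * ?E) * lt x * ?Ei = smul d (lt Y * (?E * lt x * ?Ei))"
        by (simp add: smul_times_left mult.assoc)
      have b: "?E * lt x * smul (- d) (lt Y * ?Ei) = - smul d (?E * lt x * ?Ei * lt Y)"
        unfolding lt_expser_comm smul_times_right by (rule ser_eqI) (simp add: mult.assoc)
      show ?thesis unfolding a b by simp
    qed
    finally show ?thesis by (simp add: ad_def smul_diff cj_def)
  qed
  have supp: "suppY Y 1 ?W"
    using suppY_mult[OF suppY_mult[OF suppY_expser suppY_lt[OF xY]] suppY_expser]
    by (simp add: cj_def)
  have o1: "ordge 1 ?W" unfolding cj_def by (intro ordge_multL ordge_multR ordge_lt)
  have o2: "ordge 2 (?W - lt x)"
  proof -
    have "?W - lt x = (?E - 1) * lt x * ?Ei + lt x * (?Ei - 1)"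
      by (simp add: cj_def algebra_simps)
    moreover have "ordge 2 ((?E - 1) * lt x * ?Ei)"
      using ordge_multL[OF ordge_mult[OF expser_ord1 ordge_lt, of Y d x], of ?Ei] by (simp add: numeral_2_eq_2)
    moreover have "ordge 2 (lt x * (?Ei - 1))"
      using ordge_mult[OF ordge_lt expser_ord1, of x Y "-d"] by (simp add: numeral_2_eq_2)
    ultimately show ?thesis by (simp add: ordge_add)
  qed
  have "lieh n (homog n ?W)" for n
  proof (induction n rule: less_induct)
    case (less n)
    show ?case
    proof (cases n)
      case 0 then show ?thesis using homog_ordge'[OF o1, of 0] by (simp add: lieh.lz)
    next
      case (Suc k)
      show ?thesis
      proof (cases k)
        case 0
        have "homog 1 (?W - lt x) = 0" using o2 by (intro homog_ordge') auto
        then have "homog 1 ?W = rb [x]"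
          using homog_hom[OF hom_lt, of x] by (simp add: homog_diff)
        then show ?thesis using Suc 0 lieh_rb[of "[x]" 1] by simp
      next
        case (Suc j)
        have "smul (of_nat (Suc j)) (homog n ?W) = homog n (DY Y ?W)"
          using DY_homog_supp1[OF supp, of n] Suc \<open>n = Suc k\<close> by (simp add: DY_homog)
        also have "\<dots> = smul d (ad Y (homog k ?W))"
          by (simp add: DW homog_smul \<open>n = Suc k\<close> homog_ad)
        finally have eq: "smul (of_nat (Suc j)) (homog n ?W) = smul d (ad Y (homog k ?W))" .
        have "homog n ?W = smul (1 / of_nat (Suc j)) (smul (of_nat (Suc j)) (homog n ?W))"
          by (simp add: smul_smul del: of_nat_Suc)
        also have "\<dots> = smul (d / of_nat (Suc j)) (ad Y (homog k ?W))"
          by (simp only: eq smul_smul) simp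
        finally show ?thesis
          using less[of k] \<open>n = Suc k\<close> by (simp add: lieh_smul lieh_ad)
      qed
    qed
  qed
  then show ?thesis by (simp add: lies_def)
qed

lemma cj_rb_lies: "lies (cj Y d (rb v))"
proof (induction v)
  case Nil then show ?case by simp
next
  case (Cons x v)
  show ?case
  proof (cases "v = []")
    case True
    show ?thesis
    proof (cases "x = Y")
      case True
      then show ?thesis using \<open>v = []\<close> cj_ltY lies_lieh[OF lieh_rb[of "[Y]" 1]] by simp
    next
      case False then show ?thesis using \<open>v = []\<close> cj_lt_lies by simp
    qed
  next
    case False
    have "rb (x # v) = br (rb [x]) (rb v)" using False by (simp add: ad_def br_def)
    moreover have "lies (cj Y d (rb [x]))"
    proof (cases "x = Y")
      case True then show ?thesis using cj_ltY lies_lieh[OF lieh_rb[of "[Y]" 1]] by simp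
    next
      case False then show ?thesis using cj_lt_lies by simp
    qed
    ultimately show ?thesis using Cons.IH by (simp add: cj_br lies_br)
  qed
qed

lemma cj_lieh_lies: "lieh n z \<Longrightarrow> lies (cj Y d z)"
  by (induction rule: lieh.induct) (auto simp: cj_smul cj_add intro: lies_smul lies_add cj_rb_lies)

lemma cj_lies: "lies Z \<Longrightarrow> lies (cj Y d Z)"
  unfolding lies_def
proof
  fix n assume Z: "\<forall>n. lieh n (homog n Z)"
  let ?Zt = "\<Sum>k\<le>n. homog k Z"
  have "ordge (Suc n) (Z - ?Zt)"
    unfolding ordge_def by (auto simp: cf_sum sum.delta)
  then have "homog n (cj Y d (Z - ?Zt)) = 0" by (intro homog_ordge ordge_cj)
  then have "homog n (cj Y d Z) = homog n (cj Y d ?Zt)"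
    by (simp add: cj_diff homog_diff)
  moreover have "lies (cj Y d ?Zt)"
    unfolding cj_sum using Z by (intro lies_sum cj_lieh_lies) auto
  ultimately show "lieh n (homog n (cj Y d Z))" by (simp add: lies_def)
qed

lemma lies_Lf: "lies (Lf fs)"
proof (induction fs)
  case (Cons p fs)
  obtain X c where p: "p = (X, c)" by (cases p)
  have "Lf (p # fs) = smul c (rb [X]) + cj X c (Lf fs)" by (simp add: p cj_def)
  then show ?case using Cons.IH lies_lieh[OF lieh_rb[of "[X]" 1]]
    by (simp add: lies_add lies_smul cj_lies)
qed simp


section \<open>Realizability\<close>

definition okA0 :: "(letter \<times> complex) list \<Rightarrow> bool" where
  "okA0 fs \<longleftrightarrow> (\<forall>p\<in>set fs. fst p = LA \<longrightarrow> Re (snd p) = 0)"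

lemma okA0_append[simp]: "okA0 (fs @ gs) \<longleftrightarrow> okA0 fs \<and> okA0 gs"
  by (auto simp: okA0_def)
lemma okA0_Nil[simp]: "okA0 []" by (simp add: okA0_def)
lemma okA0_Cons[simp]: "okA0 (p # fs) \<longleftrightarrow> (fst p = LA \<longrightarrow> Re (snd p) = 0) \<and> okA0 fs"
  by (auto simp: okA0_def)
lemma okA0_invl: "okA0 fs \<Longrightarrow> okA0 (invl fs)"
  by (auto simp: okA0_def invl_def)
lemma okA0_single: "(X = LA \<longrightarrow> Re d = 0) \<Longrightarrow> okA0 [(X, d)]"
  by (auto simp: okA0_def)

definition realizable :: "nat \<Rightarrow> ser \<Rightarrow> bool" where
  "realizable k q \<longleftrightarrow> (\<exists>gs. okA0 gs \<and> ordge k q \<and> ordge (Suc k) (Pl gs - 1 - q))"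

lemma real_zero: "realizable k 0"
  unfolding realizable_def by (rule exI[of _ "[]"]) (simp add: okA0_def)

lemma real_add:
  assumes k: "1 \<le> k" and a: "realizable k a" and b: "realizable k b"
  shows "realizable k (a + b)"
proof -
  obtain g1 where g1: "okA0 g1" "ordge k a" "ordge (Suc k) (Pl g1 - 1 - a)"
    using a by (auto simp: realizable_def)
  obtain g2 where g2: "okA0 g2" "ordge k b" "ordge (Suc k) (Pl g2 - 1 - b)"
    using b by (auto simp: realizable_def)
  let ?u1 = "Pl g1 - 1" and ?u2 = "Pl g2 - 1"
  have u1: "ordge k ?u1"
    using ordge_add[OF g1(2) ordge_mono[OF g1(3)]] by simp
  have u2: "ordge k ?u2"
    using ordge_add[OF g2(2) ordge_mono[OF g2(3)]] by simp
  have eq: "Pl (g1 @ g2) - 1 - (a + b) = (Pl g1 - 1 - a) + (Pl g2 - 1 - b) + ?u1 * ?u2"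
    by (simp add: Pl_append algebra_simps)
  have "ordge (Suc k) (?u1 * ?u2)" using k by (intro ordge_mult_le[OF u1 u2]) simp
  then have "ordge (Suc k) (Pl (g1 @ g2) - 1 - (a + b))"
    unfolding eq using g1(3) g2(3) by (intro ordge_add)
  moreover have "ordge k (a + b)" using g1(2) g2(2) by (rule ordge_add)
  ultimately show ?thesis using g1(1) g2(1) unfolding realizable_def
    by (intro exI[of _ "g1 @ g2"]) simp
qed

lemma real_letter: "(X = LA \<longrightarrow> Re c = 0) \<Longrightarrow> realizable 1 (smul c (lt X))"
  unfolding realizable_def
  using expser_lin[of X c]
  by (intro exI[of _ "[(X, c)]"]) (simp add: okA0_single ordge_smul numeral_2_eq_2)

lemma real_comm:
  assumes k: "1 \<le> k" and q: "realizable k q" and d: "X = LA \<longrightarrow> Re d = 0"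
  shows "realizable (Suc k) (smul d (ad X q))"
proof -
  obtain gs where gs: "okA0 gs" "ordge k q" "ordge (Suc k) (Pl gs - 1 - q)"
    using q by (auto simp: realizable_def)
  let ?Q = "Pl gs" and ?Qi = "Pl (invl gs)" and ?E = "expser X d" and ?Ei = "expser X (- d)"
  let ?H = "?Q - 1" and ?G = "?E - 1"
  let ?S = "?G - smul d (lt X)"
  let ?r = "?H - q"
  let ?T = "smul d (ad X q)"
  have H: "ordge k ?H" using ordge_add[OF gs(2) ordge_mono[OF gs(3)]] by simp
  have S: "ordge 2 ?S" using expser_lin[of X d] by simp
  have r: "ordge (Suc k) ?r" using gs(3) by simp
  have T: "ordge (Suc k) ?T" unfolding ad_def
    using ordge_mult[OF ordge_lt gs(2), of X] ordge_mult[OF gs(2) ordge_lt, of X]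
    by (intro ordge_smul ordge_diff) simp_all
  define K where "K = ?E * ?Q - ?Q * ?E"
  have K1: "K = ?G * ?H - ?H * ?G" by (simp add: K_def algebra_simps)
  have K2: "K - ?T = smul d (lt X * ?r - ?r * lt X) + (?S * ?H - ?H * ?S)"
    unfolding K1 ad_def by (rule ser_eqI) (simp add: algebra_simps cf_times sum.distrib sum_subtractf sum_distrib_left)
  have KT: "ordge (Suc (Suc k)) (K - ?T)"
  proof -
    have "ordge (Suc (Suc k)) (lt X * ?r)" by (rule ordge_mult_le[OF ordge_lt r]) simp
    moreover have "ordge (Suc (Suc k)) (?r * lt X)" by (rule ordge_mult_le[OF r ordge_lt]) simp
    moreover have "ordge (Suc (Suc k)) (?S * ?H)" by (rule ordge_mult_le[OF S H]) simp
    moreover have "ordge (Suc (Suc k)) (?H * ?S)" by (rule ordge_mult_le[OF H S]) simp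
    ultimately show ?thesis unfolding K2 by (intro ordge_add ordge_smul ordge_diff)
  qed
  have Kord: "ordge (Suc k) K"
    using ordge_add[OF T ordge_mono[OF KT]] by simp
  have C: "?E * ?Q * ?Ei * ?Qi - 1 = K * (?Ei * ?Qi)"
  proof -
    have "K * (?Ei * ?Qi) = ?E * ?Q * ?Ei * ?Qi - ?Q * (?E * ?Ei) * ?Qi"
      by (simp add: K_def algebra_simps)
    then show ?thesis by (simp add: expser_inv Pl_invl)
  qed
  have EQ1: "ordge 1 (?Ei * ?Qi - 1)"
  proof -
    have eq: "?Ei * ?Qi - 1 = (?Ei - 1) * ?Qi + (?Qi - 1)" by (simp add: algebra_simps)
    show ?thesis unfolding eq by (intro ordge_add ordge_multL expser_ord1 Pl_ord1)
  qed
  have eq2: "?E * ?Q * ?Ei * ?Qi - 1 - ?T = K * (?Ei * ?Qi - 1) + (K - ?T)"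
    unfolding C by (simp add: algebra_simps)
  have KE: "ordge (Suc (Suc k)) (K * (?Ei * ?Qi - 1))"
    by (rule ordge_mult_le[OF Kord EQ1]) simp
  have P: "Pl ([(X,d)] @ gs @ [(X,-d)] @ invl gs) = ?E * ?Q * ?Ei * ?Qi"
    by (simp add: Pl_append mult.assoc)
  have fin: "ordge (Suc (Suc k)) (Pl ([(X, d)] @ gs @ [(X, - d)] @ invl gs) - 1 - ?T)"
    unfolding P eq2 using KE KT by (intro ordge_add)
  show ?thesis unfolding realizable_def
    using fin T gs(1) d by (intro exI[of _ "[(X, d)] @ gs @ [(X, - d)] @ invl gs"])
      (auto simp: okA0_invl okA0_single)
qed

lemma ad_swap: "ad LB (lt LA) = - ad LA (lt LB)" by (simp add: ad_def)
lemma ad_self: "ad X (lt X) = 0" by (simp add: ad_def)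

lemma real_rb_aux: "v \<noteq> [] \<Longrightarrow> realizable (Suc (length v)) (smul c (rb (x # v)))"
proof (induction v arbitrary: x c)
  case Nil then show ?case by simp
next
  case (Cons y v)
  define kx where "kx = (if x = LA then \<i> else 1)"
  have kx0: "kx \<noteq> 0" and kxA: "x = LA \<longrightarrow> Re kx = 0" by (auto simp: kx_def)
  have eq: "smul c (rb (x # y # v)) = smul kx (ad x (smul (c / kx) (rb (y # v))))"
    using kx0 by (simp add: ad_smul smul_smul)
  show ?case
  proof (cases "v = []")
    case False
    have "realizable (Suc (length v)) (smul (c / kx) (rb (y # v)))" using Cons.IH[OF False] .
    then have "realizable (Suc (Suc (length v))) (smul kx (ad x (smul (c / kx) (rb (y # v)))))"
      by (intro real_comm kxA) simp_all
    then show ?thesis by (simp only: eq length_Cons)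
  next
    case True
    show ?thesis
    proof (cases y)
      case LB
      have "realizable 1 (smul (c / kx) (lt y))" using LB by (intro real_letter) simp
      then have "realizable (Suc 1) (smul kx (ad x (smul (c / kx) (lt y))))"
        by (intro real_comm kxA) simp_all
      then show ?thesis unfolding eq using True by simp
    next
      case LA
      show ?thesis
      proof (cases x)
        case LA
        then have "smul c (rb (x # y # v)) = 0" using True \<open>y = LA\<close> by (simp add: ad_self)
        then show ?thesis by (simp add: real_zero)
      next
        case LB
        have e2: "smul c (rb (x # y # v)) = smul \<i> (ad LA (smul (- c / \<i>) (lt LB)))"
        proof -
          have r: "rb (x # y # v) = - ad LA (lt LB)" using True LB \<open>y = LA\<close> by (simp add: ad_swap)
          have "smul \<i> (ad LA (smul (- c / \<i>) (lt LB))) = smul (- c) (ad LA (lt LB))"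
            by (simp add: ad_smul smul_smul)
          moreover have "smul c (- ad LA (lt LB)) = smul (- c) (ad LA (lt LB))"
            by (rule ser_eqI) simp
          ultimately show ?thesis unfolding r by simp
        qed
        have "realizable 1 (smul (- c / \<i>) (lt LB))" by (intro real_letter) simp
        then have "realizable (Suc 1) (smul \<i> (ad LA (smul (- c / \<i>) (lt LB))))"
          by (intro real_comm) simp_all
        then show ?thesis unfolding e2 using True by simp
      qed
    qed
  qed
qed

lemma real_lieh: "lieh n z \<Longrightarrow> 2 \<le> n \<Longrightarrow> realizable n z"
proof (induction rule: lieh.induct)
  case (lz n) then show ?case by (simp add: real_zero)
next
  case (lg v n c)
  have l2: "2 \<le> length v" using lg by simp
  obtain x v' where v1: "v = x # v'" using l2 by (cases v) auto
  have v: "v = x # v'" "v' \<noteq> []" using l2 v1 by auto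
  then show ?case using real_rb_aux[of v' c x] lg by simp
next
  case (la n a b) then show ?case by (simp add: real_add)
qed


definition okA :: "(letter \<times> complex) list \<Rightarrow> bool" where
  "okA fs \<longleftrightarrow> (\<forall>p\<in>set fs. fst p = LA \<longrightarrow> Re (snd p) \<ge> 0)"

lemma okA0_okA: "okA0 fs \<Longrightarrow> okA fs" by (auto simp: okA0_def okA_def)
lemma okA_append[simp]: "okA (fs @ gs) \<longleftrightarrow> okA fs \<and> okA gs" by (auto simp: okA_def)

definition lAB :: ser where "lAB = lt LA + lt LB"

lemma hom_ordge: "hom n f \<Longrightarrow> ordge n f" by (simp add: hom_def ordge_def)

lemma ordge_homog_rest: "ordge n D \<Longrightarrow> ordge (Suc n) (D - homog n D)"
  by (simp add: ordge_def)

lemma Nd_hom: "hom n f \<Longrightarrow> Nd f = smul (of_nat n) f"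
  by (rule ser_eqI) (auto simp: hom_def)

lemma base_case: "\<exists>fs. okA fs \<and> ordge 2 (Lf fs - lAB)"
proof -
  let ?fs = "[(LA, 1), (LB, 1)]"
  have "Lf ?fs - lAB = (expser LA 1 - 1) * lt LB * expser LA (-1) + lt LB * (expser LA (-1) - 1)"
    by (simp add: lAB_def algebra_simps)
  moreover have "ordge 2 ((expser LA 1 - 1) * lt LB * expser LA (-1))"
    using ordge_multL[OF ordge_mult[OF expser_ord1 ordge_lt, of LA 1 LB], of "expser LA (-1)"]
    by (simp add: numeral_2_eq_2)
  moreover have "ordge 2 (lt LB * (expser LA (-1) - 1))"
    using ordge_mult[OF ordge_lt expser_ord1, of LB LA "-1"] by (simp add: numeral_2_eq_2)
  ultimately show ?thesis by (intro exI[of _ ?fs]) (simp add: okA_def ordge_add)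
qed

lemma step_case:
  assumes p: "1 \<le> p" and fs: "okA fs" and D: "ordge (Suc p) (Lf fs - lAB)"
  shows "\<exists>fs'. okA fs' \<and> ordge (Suc (Suc p)) (Lf fs' - lAB)"
proof -
  let ?D = "Lf fs - lAB"
  define Z where "Z = homog (Suc p) (Lf fs)"
  have Zl: "lieh (Suc p) Z" using lies_Lf[of fs] by (simp add: lies_def Z_def)
  have ZD: "Z = homog (Suc p) ?D"
  proof -
    have "hom 1 lAB" unfolding lAB_def by (intro hom_add hom_lt)
    then have "homog (Suc p) lAB = 0" using p by (intro homog_hom0) auto
    then show ?thesis by (simp add: Z_def homog_diff)
  qed
  define q where "q = smul (- 1 / of_nat (Suc p)) Z"
  have "lieh (Suc p) q" unfolding q_def by (rule lieh_smul[OF Zl])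
  then have "realizable (Suc p) q" using p by (intro real_lieh) auto
  then obtain gs where gs: "okA0 gs" "ordge (Suc p) q" "ordge (Suc (Suc p)) (Pl gs - 1 - q)"
    by (auto simp: realizable_def)
  have Zq: "smul (of_nat (Suc p)) q = - Z" unfolding q_def smul_smul
    by (rule ser_eqI) (simp del: of_nat_Suc)
  let ?Pg = "Pl gs" and ?Pgi = "Pl (invl gs)" and ?Lg = "Lf gs"
  have Lg: "?Lg = Nd ?Pg * ?Pgi"
  proof -
    have "Nd ?Pg * ?Pgi = ?Lg * (?Pg * ?Pgi)" by (simp add: Nd_Pl mult.assoc)
    then show ?thesis by (simp add: Pl_invl)
  qed
  have hq: "hom (Suc p) q" unfolding q_def by (intro hom_smul lieh_hom[OF Zl])
  have NPg: "Nd ?Pg = Nd (?Pg - 1 - q) + smul (of_nat (Suc p)) q"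
    using Nd_hom[OF hq] by (simp add: Nd_diff)
  have "?Lg + Z = Nd (?Pg - 1 - q) * ?Pgi + smul (of_nat (Suc p)) q * (?Pgi - 1)"
    unfolding Lg NPg using Zq by (simp add: algebra_simps)
  moreover have "ordge (Suc (Suc p)) (Nd (?Pg - 1 - q) * ?Pgi)"
    by (intro ordge_multL ordge_Nd gs(3))
  moreover have "ordge (Suc (Suc p)) (smul (of_nat (Suc p)) q * (?Pgi - 1))"
    using ordge_mult[OF ordge_smul[OF gs(2)] Pl_ord1] by simp
  ultimately have LgZ: "ordge (Suc (Suc p)) (?Lg + Z)" by (simp add: ordge_add)
  have Lgo: "ordge (Suc p) ?Lg"
  proof -
    have "?Lg = (?Lg + Z) - Z" by simp
    moreover have "ordge (Suc p) Z" by (rule hom_ordge[OF lieh_hom[OF Zl]])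
    ultimately show ?thesis using ordge_mono[OF LgZ] by (metis le_SucI order_refl ordge_diff)
  qed
  let ?Pf = "Pl fs" and ?Pfi = "Pl (invl fs)"
  have conj: "ordge (Suc (Suc p)) (?Pf * ?Lg * ?Pfi - ?Lg)"
  proof -
    have eq: "?Pf * ?Lg * ?Pfi - ?Lg = (?Pf - 1) * ?Lg * ?Pfi + ?Lg * (?Pfi - 1)"
      by (simp add: algebra_simps)
    have "ordge (1 + Suc p) ((?Pf - 1) * ?Lg)" by (rule ordge_mult[OF Pl_ord1 Lgo])
    then have a: "ordge (Suc (Suc p)) ((?Pf - 1) * ?Lg * ?Pfi)" by (simp add: ordge_multL)
    have b: "ordge (Suc (Suc p)) (?Lg * (?Pfi - 1))" using ordge_mult[OF Lgo Pl_ord1] by simp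
    show ?thesis unfolding eq using a b by (rule ordge_add)
  qed
  have eqf: "Lf (fs @ gs) - lAB = (?D - Z) + (?Lg + Z) + (?Pf * ?Lg * ?Pfi - ?Lg)"
    by (simp add: Lf_append algebra_simps)
  have "ordge (Suc (Suc p)) (?D - Z)" unfolding ZD by (rule ordge_homog_rest[OF D])
  then have "ordge (Suc (Suc p)) (Lf (fs @ gs) - lAB)"
    unfolding eqf by (rule ordge_add[OF ordge_add[OF _ LgZ] conj])
  then show ?thesis using fs okA0_okA[OF gs(1)] by (intro exI[of _ "fs @ gs"]) simp
qed

lemma main_constr: "1 \<le> p \<Longrightarrow> \<exists>fs. okA fs \<and> ordge (Suc p) (Lf fs - lAB)"
proof (induction p rule: nat_induct_at_least)
  case base then show ?case using base_case by (simp add: numeral_2_eq_2)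
next
  case (Suc n) then show ?case using step_case by blast
qed

lemma order_from_L:
  assumes D: "ordge (Suc p) (Lf fs - lAB)"
  shows "length w \<le> p \<Longrightarrow> cf (Pl fs) w = 1 / fact (length w)"
proof (induction w)
  case Nil then show ?case by simp
next
  case (Cons x w)
  let ?P = "Pl fs"
  have "ordge (Suc p) ((Lf fs - lAB) * ?P)" by (rule ordge_multL[OF D])
  then have "cf ((Lf fs - lAB) * ?P) (x # w) = 0" using Cons.prems by (intro ordgeD) auto
  then have "cf (Nd ?P) (x # w) = cf (lAB * ?P) (x # w)"
    by (simp add: Nd_Pl algebra_simps)
  also have "\<dots> = cf ?P w"
    by (cases x) (simp_all add: lAB_def distrib_right cf_lt_times)
  finally have "of_nat (Suc (length w)) * cf ?P (x # w) = 1 / fact (length w)"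
    using Cons by simp
  then show ?case by (simp add: field_simps del: of_nat_Suc)
qed


section \<open>Conversion to splitting form\<close>

definition pairf :: "letter \<times> complex \<Rightarrow> (letter \<times> complex) list" where
  "pairf p = (if fst p = LA then [(LA, snd p), (LB, 0)] else [(LA, 0), (LB, snd p)])"

lemma Pl_pairf: "Pl (pairf p) = expser (fst p) (snd p)"
proof (cases p)
  case (Pair X c) then show ?thesis by (cases X) (simp_all add: pairf_def)
qed

lemma Pl_concat_pairf: "Pl (concat (map pairf fs)) = Pl fs"
proof (induction fs)
  case (Cons p fs)
  obtain X c where p: "p = (X, c)" by (cases p)
  show ?case using Cons Pl_pairf[of p] by (simp add: Pl_append p)
qed simp

lemma final_exists:
  assumes "okA fs" "\<And>w. length w \<le> p \<Longrightarrow> cf (Pl fs) w = 1 / fact (length w)"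
  shows "\<exists>(s::nat) (a::nat \<Rightarrow> complex) (b::nat \<Rightarrow> complex).
              splitting_has_order p s a b \<and> (\<forall>i\<in>{1..s}. Re (a i) \<ge> 0)"
proof -
  define s where "s = length fs"
  define a where "a i = (if fst (fs ! (i - 1)) = LA then snd (fs ! (i - 1)) else 0)" for i
  define b where "b i = (if i = 0 then 0 else if fst (fs ! (i - 1)) = LB then snd (fs ! (i - 1)) else 0)" for i
  have m: "map (\<lambda>i. [(LA, a i), (LB, b i)]) [1..<s+1] = map pairf fs"
  proof -
    have "[1..<s+1] = map Suc [0..<s]" by (simp only: map_Suc_upt) simp
    then have "map (\<lambda>i. [(LA, a i), (LB, b i)]) [1..<s+1] = map (\<lambda>i. pairf (fs ! i)) [0..<length fs]"
      unfolding s_def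
    proof (simp only: map_map, intro map_cong refl)
      fix i assume "i \<in> set [0..<length fs]"
      obtain X c where xc: "fs ! i = (X, c)" by (cases "fs ! i")
      show "((\<lambda>i. [(LA, a i), (LB, b i)]) \<circ> Suc) i = pairf (fs ! i)"
        by (cases X) (simp_all add: xc a_def b_def pairf_def)
    qed
    also have "\<dots> = map pairf (map (\<lambda>i. fs ! i) [0..<length fs])" by (simp only: map_map comp_def)
    also have "\<dots> = map pairf fs" by (simp only: map_nth)
    finally show ?thesis .
  qed
  have P: "Pl (splitting_factors s a b) = Pl fs"
    unfolding splitting_factors_def m by (simp add: b_def Pl_concat_pairf)
  have ord: "splitting_has_order p s a b"
    unfolding splitting_has_order_def exact_coeff_def
  proof (intro allI impI)
    fix w :: "letter list" assume "length w \<le> p"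
    then show "exp_prod_coeff (splitting_factors s a b) w = 1 / of_nat (fact (length w))"
      using assms(2) cf_Pl[of "splitting_factors s a b" w] by (simp add: P)
  qed
  have pos: "\<forall>i\<in>{1..s}. Re (a i) \<ge> 0"
  proof
    fix i assume "i \<in> {1..s}"
    then have "fs ! (i - 1) \<in> set fs" by (auto simp: s_def)
    then show "Re (a i) \<ge> 0" using assms(1) by (auto simp: a_def okA_def)
  qed
  show ?thesis using ord pos by blast
qed

theorem theorem2p4:
  shows "\<forall>p::nat. p \<le> 44 \<longrightarrow>
           (\<exists>(s::nat) (a::nat \<Rightarrow> complex) (b::nat \<Rightarrow> complex).
              splitting_has_order p s a b \<and> (\<forall>i\<in>{1..s}. Re (a i) \<ge> 0))"
proof (intro allI impI)
  fix p :: nat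
  obtain fs where fs: "okA fs" "ordge (Suc (max p 1)) (Lf fs - lAB)"
    using main_constr[of "max p 1"] by auto
  have "\<And>w. length w \<le> p \<Longrightarrow> cf (Pl fs) w = 1 / fact (length w)"
    using order_from_L[OF fs(2)] by auto
  then show "\<exists>(s::nat) (a::nat \<Rightarrow> complex) (b::nat \<Rightarrow> complex).
              splitting_has_order p s a b \<and> (\<forall>i\<in>{1..s}. Re (a i) \<ge> 0)"
    using final_exists[OF fs(1)] by blast
qed

end
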